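(* For every $n \geq 3$ and every $i \in \{1,\ldots,n\}$, the number of arrangements in $\{D_n\}$ whose first entry is $i$ is exactly $Der_{n-1}$.
   Context: A linear arrangement of $\{1,\ldots,n\}$ is a sequence $a_1\cdots a_n$ in which each of $1,\ldots,n$ appears exactly once. It contains the pattern $ij$ if $a_t=i$ and $a_{t+1}=j$ for some $t$; otherwise it avoids it. $\{D_n\}$ is the set of linear arrangements of $\{1,\ldots,n\}$ avoiding all of the patterns $12, 23, \ldots, (n-1)n, n1$. $Der_{m}$ is the number of permutations of $\{1,\ldots,m\}$ with no fixed point. *)

theory Defs
  imports "HOL-Combinatorics.Permutations"
begin

definition arrangements :: "nat \<Rightarrow> nat list set" where
  "arrangements n = {xs. distinct xs \<and> set xs = {1..n}}"

definition contains_pattern :: "nat list \<Rightarrow> nat \<Rightarrow> nat \<Rightarrow> bool" where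
  "contains_pattern xs i j \<longleftrightarrow> (\<exists>t. Suc t < length xs \<and> xs ! t = i \<and> xs ! Suc t = j)"

definition D :: "nat \<Rightarrow> nat list set" where
  "D n = {xs \<in> arrangements n.
            (\<forall>k\<in>{1..<n}. \<not> contains_pattern xs k (Suc k)) \<and> \<not> contains_pattern xs n 1}"

definition Der :: "nat \<Rightarrow> nat" where
  "Der m = card {p. p permutes {1..m} \<and> (\<forall>x\<in>{1..m}. p x \<noteq> x)}"

end

theory Submission imports Defs "HOL-Combinatorics.Multiset_Permutations"
begin

fun noadj :: "('a \<times> 'a) set \<Rightarrow> 'a list \<Rightarrow> bool" where
  "noadj F (x # y # zs) = ((x, y) \<notin> F \<and> noadj F (y # zs))"
| "noadj F _ = True"

lemma noadj_Cons: "noadj F (a # w) = (noadj F w \<and> (w \<noteq> [] \<longrightarrow> (a, hd w) \<notin> F))"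
  by (cases w) auto

lemma noadj_restrict:
  "F \<inter> (set xs \<times> set xs) = G \<inter> (set xs \<times> set xs) \<Longrightarrow> noadj F xs = noadj G xs"
proof (induction xs)
  case Nil then show ?case by simp
next
  case (Cons a w)
  have "F \<inter> (set w \<times> set w) = G \<inter> (set w \<times> set w)" using Cons.prems by auto
  with Cons.IH have "noadj F w = noadj G w" by simp
  moreover have "w \<noteq> [] \<Longrightarrow> ((a, hd w) \<in> F) = ((a, hd w) \<in> G)"
    using Cons.prems by (cases w) auto
  ultimately show ?case by (simp add: noadj_Cons)
qed

fun g :: "nat \<Rightarrow> nat \<Rightarrow> int" where
  "g s 0 = fact s"
| "g s (Suc k) = g s k - g (s - 1) k"

definition good :: "'a set \<Rightarrow> ('a \<times> 'a) set \<Rightarrow> bool" where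
  "good S F \<longleftrightarrow> finite S \<and> F \<subseteq> S \<times> S \<and> inj_on fst F \<and> inj_on snd F \<and>
     (\<exists>r::'a \<Rightarrow> nat. \<forall>p\<in>F. r (fst p) < r (snd p))"

definition words :: "'a set \<Rightarrow> 'a list set" where
  "words S = {xs. distinct xs \<and> set xs = S}"

fun ex :: "'a \<Rightarrow> 'a \<Rightarrow> 'a list \<Rightarrow> 'a list" where
  "ex x y [] = []"
| "ex x y (z # u) = (if z = x then x # y # ex x y u else z # ex x y u)"

lemma ex_id: "x \<notin> set u \<Longrightarrow> ex x y u = u"
  by (induction u) auto

lemma hd_ex: "u \<noteq> [] \<Longrightarrow> hd (ex x y u) = hd u"
  by (cases u) auto

lemma ex_Nil: "(ex x y u = []) = (u = [])"
  by (cases u) auto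

lemma set_ex_gen: "set (ex x y u) = set u \<union> (if x \<in> set u then {y} else {})"
  by (induction u) auto

lemma set_ex: "x \<in> set u \<Longrightarrow> set (ex x y u) = insert y (set u)"
  by (simp add: set_ex_gen)

lemma noadj_single: "\<not> noadj {(x,y)} w \<Longrightarrow> x \<in> set w \<and> y \<in> set w"
  by (induction "{(x,y)}" w rule: noadj.induct) auto

lemma filter_ex: "y \<notin> set u \<Longrightarrow> x \<noteq> y \<Longrightarrow> filter (\<lambda>z. z \<noteq> y) (ex x y u) = u"
  by (induction u) auto

lemma distinct_ex: "distinct u \<Longrightarrow> y \<notin> set u \<Longrightarrow> x \<noteq> y \<Longrightarrow> distinct (ex x y u)"
proof (induction u)
  case Nil then show ?case by simp
next
  case (Cons z u)
  have "set (ex x y u) \<subseteq> insert y (set u)"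
    by (cases "x \<in> set u") (auto simp: set_ex ex_id)
  moreover have "z = x \<Longrightarrow> set (ex x y u) = set u" using Cons.prems by (simp add: ex_id)
  ultimately show ?case using Cons by auto
qed

lemma ex_filter: "distinct xs \<Longrightarrow> \<not> noadj {(x,y)} xs \<Longrightarrow> ex x y (filter (\<lambda>z. z \<noteq> y) xs) = xs"
proof (induction xs)
  case Nil then show ?case by simp
next
  case (Cons a w)
  show ?case
  proof (cases "a = x")
    case True
    then have "w \<noteq> [] \<and> hd w = y \<or> \<not> noadj {(x,y)} w" using Cons.prems by (auto simp: noadj_Cons)
    moreover have "\<not> noadj {(x,y)} w \<Longrightarrow> x \<in> set w"
      using noadj_single by metis
    ultimately obtain w' where w: "w = y # w'" using Cons.prems True by (cases w) auto
    then have "x \<notin> set w'" "y \<notin> set w'" "x \<noteq> y" using Cons.prems True by auto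
    moreover have "filter (\<lambda>z. z \<noteq> y) w' = w'" using \<open>y \<notin> set w'\<close> by (induction w') auto
    ultimately show ?thesis using True w by (simp add: ex_id)
  next
    case False
    have nd: "\<not> noadj {(x,y)} w" using Cons.prems False by (auto simp: noadj_Cons)
    have "y \<in> set w" using nd noadj_single by metis
    then have "a \<noteq> y" using Cons.prems by auto
    then show ?thesis using Cons False nd by auto
  qed
qed

lemma noadj_Un: "noadj (A \<union> B) xs = (noadj A xs \<and> noadj B xs)"
  by (induction xs rule: noadj.induct) auto

lemma noadj_empty: "noadj {} xs"
  by (induction "{}::('a\<times>'a) set" xs rule: noadj.induct) auto

lemma not_noadj_ex: "x \<in> set u \<Longrightarrow> \<not> noadj {(x,y)} (ex x y u)"
proof (induction u)
  case Nil then show ?case by simp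
next
  case (Cons z u)
  then show ?case by (cases "z = x") (auto simp: noadj_Cons)
qed

lemma noadj_ex:
  fixes F0 F' :: "('a \<times> 'a) set"
  assumes P1: "\<And>b. (y,b) \<in> F0 \<Longrightarrow> (x,b) \<in> F'"
    and P2: "\<And>z b. z \<noteq> y \<Longrightarrow> (z,b) \<in> F0 \<Longrightarrow> (z,b) \<in> F'"
    and P3: "\<And>b. (x,b) \<in> F' \<Longrightarrow> (y,b) \<in> F0"
    and P4: "\<And>z b. z \<noteq> x \<Longrightarrow> (z,b) \<in> F' \<Longrightarrow> (z,b) \<in> F0"
    and xy: "(x,y) \<notin> F0"
  shows "y \<notin> set u \<Longrightarrow> noadj F0 (ex x y u) = noadj F' u"
proof (induction u)
  case Nil then show ?case by simp
next
  case (Cons z u)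
  then have IH: "noadj F0 (ex x y u) = noadj F' u" and zy: "z \<noteq> y" by auto
  show ?case
  proof (cases "z = x")
    case True
    then show ?thesis using IH xy P1 P3 by (auto simp: noadj_Cons hd_ex ex_Nil)
  next
    case False
    then show ?thesis using IH zy P2 P4 by (auto simp: noadj_Cons hd_ex ex_Nil)
  qed
qed

lemma count_N: "good S F \<Longrightarrow> int (card {xs\<in>words S. noadj F xs}) = g (card S) (card F)"
proof (induction "card F" arbitrary: S F)
  case 0
  then have "finite F" unfolding good_def by (meson finite_SigmaI finite_subset)
  with 0 have "F = {}" by simp
  moreover have "{xs\<in>words S. noadj {} xs} = permutations_of_set S"
    by (auto simp: words_def permutations_of_set_def noadj_empty)
  ultimately show ?case using 0 by (simp add: good_def)
next
  case (Suc k)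
  from Suc.prems obtain r :: "'a \<Rightarrow> nat" where r: "\<forall>p\<in>F. r (fst p) < r (snd p)"
    and fin: "finite S" and sub: "F \<subseteq> S \<times> S" and if1: "inj_on fst F" and if2: "inj_on snd F"
    unfolding good_def by blast
  have finF: "finite F" using fin sub by (meson finite_SigmaI finite_subset)
  from Suc.hyps(2) have "F \<noteq> {}" by auto
  then obtain x y where xyF: "(x,y) \<in> F" by auto
  have xy: "x \<noteq> y" using r xyF by fastforce
  have xS: "x \<in> S" and yS: "y \<in> S" using sub xyF by auto
  define F0 where "F0 = F - {(x,y)}"
  define h where "h = (\<lambda>p::'a\<times>'a. (if fst p = y then x else fst p, snd p))"
  define F' where "F' = h ` F0"
  have cF0: "card F0 = k" using Suc.hyps(2) xyF finF by (simp add: F0_def)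
  have gF0: "good S F0" using Suc.prems unfolding good_def F0_def
    by (auto intro: inj_on_subset)
  have hinj: "inj_on (fst \<circ> h) F0"
  proof (rule inj_onI)
    fix p q assume p: "p \<in> F0" and q: "q \<in> F0" and e: "(fst \<circ> h) p = (fst \<circ> h) q"
    have pF: "p \<in> F" and qF: "q \<in> F" and pn: "p \<noteq> (x,y)" and qn: "q \<noteq> (x,y)"
      using p q by (auto simp: F0_def)
    have nx: "\<And>b. (x,b) \<in> F \<Longrightarrow> (x,b) = (x,y)" using if1 xyF by (metis fst_conv inj_on_def)
    show "p = q"
    proof (cases "fst p = y"; cases "fst q = y")
      assume "fst p = y" "fst q = y" then show ?thesis using inj_onD[OF if1 _ pF qF] by simp
    next
      assume "fst p = y" "fst q \<noteq> y"
      then have "fst q = x" using e by (simp add: h_def)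
      then have "q = (x,y)" using nx[of "snd q"] qF by (metis prod.collapse)
      then show ?thesis using qn by simp
    next
      assume "fst p \<noteq> y" "fst q = y"
      then have "fst p = x" using e by (simp add: h_def)
      then have "p = (x,y)" using nx[of "snd p"] pF by (metis prod.collapse)
      then show ?thesis using pn by simp
    next
      assume "fst p \<noteq> y" "fst q \<noteq> y"
      then have "fst p = fst q" using e by (simp add: h_def)
      then show ?thesis using inj_onD[OF if1 _ pF qF] by simp
    qed
  qed
  have hinj2: "inj_on h F0" using hinj by (auto simp: inj_on_def)
  have cF': "card F' = k" using hinj2 cF0 by (simp add: F'_def card_image)
  have snd_ne_y: "\<And>p. p \<in> F0 \<Longrightarrow> snd p \<noteq> y"
  proof -
    fix p assume "p \<in> F0"
    then have "p \<in> F" "p \<noteq> (x,y)" by (auto simp: F0_def)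
    then show "snd p \<noteq> y" using if2 xyF by (metis inj_on_def snd_conv)
  qed
  have gF': "good (S - {y}) F'"
    unfolding good_def
  proof (intro conjI)
    show "finite (S - {y})" using fin by simp
    show "F' \<subseteq> (S - {y}) \<times> (S - {y})"
    proof
      fix q assume "q \<in> F'"
      then obtain p where p: "p \<in> F0" "q = h p" by (auto simp: F'_def)
      then have "p \<in> S \<times> S" using sub by (auto simp: F0_def)
      then show "q \<in> (S - {y}) \<times> (S - {y})"
        using p snd_ne_y[OF p(1)] xS xy by (auto simp: h_def)
    qed
    show "inj_on fst F'" unfolding F'_def using hinj by (rule inj_on_imageI)
    show "inj_on snd F'" unfolding F'_def
      by (rule inj_on_imageI) (use if2 in \<open>auto simp: h_def F0_def comp_def inj_on_def\<close>)
    show "\<exists>r::'a \<Rightarrow> nat. \<forall>p\<in>F'. r (fst p) < r (snd p)"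
    proof (intro exI ballI)
      fix q assume "q \<in> F'"
      then obtain p where p: "p \<in> F0" "q = h p" by (auto simp: F'_def)
      have "r (fst p) < r (snd p)" using r p by (auto simp: F0_def)
      moreover have "r x < r y" using r xyF by fastforce
      ultimately show "r (fst q) < r (snd q)" using p by (auto simp: h_def)
    qed
  qed
  have cS: "card (S - {y}) = card S - 1" using yS fin by simp
  have IH1: "int (card {xs\<in>words S. noadj F0 xs}) = g (card S) k"
    using Suc.hyps(1)[OF cF0[symmetric] gF0] cF0 by simp
  have IH2: "int (card {xs\<in>words (S - {y}). noadj F' xs}) = g (card S - 1) k"
    using Suc.hyps(1)[OF cF'[symmetric] gF'] cS cF' by simp
  have Feq: "F = F0 \<union> {(x,y)}" using xyF by (auto simp: F0_def)
  define B where "B = {xs\<in>words S. noadj F0 xs \<and> \<not> noadj {(x,y)} xs}"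
  define W' where "W' = {xs\<in>words (S - {y}). noadj F' xs}"
  have nF: "\<And>xs. noadj F xs = (noadj F0 xs \<and> noadj {(x,y)} xs)"
    by (subst Feq) (rule noadj_Un)
  have split: "{xs\<in>words S. noadj F0 xs} = {xs\<in>words S. noadj F xs} \<union> B"
    unfolding B_def nF by auto
  have disj: "{xs\<in>words S. noadj F xs} \<inter> B = {}"
    unfolding B_def nF by auto
  have finW: "finite (words S)"
  proof -
    have "words S = permutations_of_set S" by (auto simp: words_def permutations_of_set_def)
    then show ?thesis using fin by simp
  qed
  have P1: "\<And>b. (y,b) \<in> F0 \<Longrightarrow> (x,b) \<in> F'"
    unfolding F'_def by (rule image_eqI[rotated], assumption) (simp add: h_def)
  have P2: "\<And>z b. z \<noteq> y \<Longrightarrow> (z,b) \<in> F0 \<Longrightarrow> (z,b) \<in> F'"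
    unfolding F'_def by (rule image_eqI[rotated], assumption) (simp add: h_def)
  have P3: "\<And>b. (x,b) \<in> F' \<Longrightarrow> (y,b) \<in> F0"
  proof -
    fix b assume "(x,b) \<in> F'"
    then obtain p where p: "p \<in> F0" "(x,b) = h p" by (auto simp: F'_def)
    show "(y,b) \<in> F0"
    proof (cases "fst p = y")
      case True then show ?thesis using p by (cases p) (auto simp: h_def)
    next
      case False
      then have "p = (x,b)" using p by (auto simp: h_def)
      then have "(x,b) \<in> F" "(x,b) \<noteq> (x,y)" using p by (auto simp: F0_def)
      then show ?thesis using if1 xyF by (metis fst_conv inj_on_def)
    qed
  qed
  have P4: "\<And>z b. z \<noteq> x \<Longrightarrow> (z,b) \<in> F' \<Longrightarrow> (z,b) \<in> F0"
  proof -
    fix z b assume "z \<noteq> x" "(z,b) \<in> F'"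
    then obtain p where p: "p \<in> F0" "(z,b) = h p" by (auto simp: F'_def)
    then have "fst p \<noteq> y" using \<open>z \<noteq> x\<close> by (auto simp: h_def)
    then have "p = (z,b)" using p by (auto simp: h_def)
    then show "(z,b) \<in> F0" using p by simp
  qed
  have xyF0: "(x,y) \<notin> F0" by (simp add: F0_def)
  have NE: "\<And>u. y \<notin> set u \<Longrightarrow> noadj F0 (ex x y u) = noadj F' u"
    apply (rule noadj_ex[of y F0 x F'])
         apply (erule P1)
        apply (erule (1) P2)
       apply (erule P3)
      apply (erule (1) P4)
     apply (rule xyF0)
    apply assumption
    done
  have Beq: "B = ex x y ` W'"
  proof
    show "ex x y ` W' \<subseteq> B"
    proof
      fix v assume "v \<in> ex x y ` W'"
      then obtain u where u: "u \<in> W'" "v = ex x y u" by auto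
      then have du: "distinct u" and su: "set u = S - {y}" and nu: "noadj F' u"
        by (auto simp: W'_def words_def)
      have yu: "y \<notin> set u" and xu: "x \<in> set u" using su xS xy by auto
      have "distinct v" using u(2) distinct_ex[OF du yu xy] by simp
      moreover have "set v = S" using u(2) set_ex[OF xu] su yS by auto
      moreover have "noadj F0 v" using u(2) NE[OF yu] nu by simp
      moreover have "\<not> noadj {(x,y)} v" using u(2) not_noadj_ex[OF xu] by simp
      ultimately show "v \<in> B" unfolding B_def words_def by simp
    qed
  next
    show "B \<subseteq> ex x y ` W'"
    proof
      fix v assume "v \<in> B"
      then have dv: "distinct v" and sv: "set v = S" and nv: "noadj F0 v" and av: "\<not> noadj {(x,y)} v"
        by (auto simp: B_def words_def)
      define u where "u = filter (\<lambda>z. z \<noteq> y) v"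
      have vu: "v = ex x y u" unfolding u_def using ex_filter[OF dv av] by simp
      have yu: "y \<notin> set u" by (simp add: u_def)
      have "distinct u" "set u = S - {y}" using dv sv by (auto simp: u_def)
      moreover have "noadj F' u" using NE[OF yu] nv vu by metis
      ultimately have "u \<in> W'" unfolding W'_def words_def by simp
      then show "v \<in> ex x y ` W'" using vu by auto
    qed
  qed
  have injex: "inj_on (ex x y) W'"
  proof (rule inj_onI)
    fix u v assume "u \<in> W'" "v \<in> W'" and e: "ex x y u = ex x y v"
    then have "y \<notin> set u" "y \<notin> set v" by (auto simp: W'_def words_def)
    then have "filter (\<lambda>z. z \<noteq> y) (ex x y u) = u" "filter (\<lambda>z. z \<noteq> y) (ex x y v) = v"
      using filter_ex xy by metis+
    then show "u = v" using e by metis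
  qed
  have cB: "card B = card W'" using Beq injex by (simp add: card_image)
  have "card {xs\<in>words S. noadj F0 xs} = card {xs\<in>words S. noadj F xs} + card B"
    unfolding split using disj finW by (subst card_Un_disjoint) (auto simp: B_def)
  then have "int (card {xs\<in>words S. noadj F xs}) = g (card S) k - g (card S - 1) k"
    using IH1 IH2 cB by (simp add: W'_def)
  then show ?case by (metis g.simps(2) Suc.hyps(2))
qed

lemma permutes_fix_iff:
  assumes "x \<in> S"
  shows "(p permutes S \<and> p x = x) \<longleftrightarrow> p permutes (S - {x})"
proof
  assume "p permutes S \<and> p x = x"
  then show "p permutes (S - {x})" by (auto intro: permutes_superset)
next
  assume "p permutes (S - {x})"
  then show "p permutes S \<and> p x = x"
    by (auto intro: permutes_subset permutes_not_in)
qed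

lemma count_P_aux:
  "finite T \<Longrightarrow> finite S \<Longrightarrow> T \<subseteq> S \<Longrightarrow>
     int (card {p. p permutes S \<and> (\<forall>z\<in>T. p z \<noteq> z)}) = g (card S) (card T)"
proof (induction T arbitrary: S rule: finite_induct)
  case empty
  then show ?case by (simp add: card_permutations)
next
  case (insert x T)
  have xS: "x \<in> S" and TS: "T \<subseteq> S - {x}" using insert.prems insert.hyps by auto
  have IH1: "int (card {p. p permutes S \<and> (\<forall>z\<in>T. p z \<noteq> z)}) = g (card S) (card T)"
    using insert.IH insert.prems by auto
  have IH2: "int (card {p. p permutes (S - {x}) \<and> (\<forall>z\<in>T. p z \<noteq> z)}) = g (card S - 1) (card T)"
    using insert.IH[of "S - {x}"] insert.prems TS xS by auto
  let ?A = "{p. p permutes S \<and> (\<forall>z\<in>insert x T. p z \<noteq> z)}"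
  let ?B = "{p. p permutes (S - {x}) \<and> (\<forall>z\<in>T. p z \<noteq> z)}"
  have eq: "{p. p permutes S \<and> (\<forall>z\<in>T. p z \<noteq> z)} = ?A \<union> ?B"
    using permutes_fix_iff[OF xS] by auto
  have disj: "?A \<inter> ?B = {}"
    using permutes_fix_iff[OF xS] by auto
  have fA: "finite ?A" using finite_permutations[OF insert.prems(1)] by (rule rev_finite_subset) auto
  have fB: "finite ?B" using finite_permutations[of "S - {x}"] insert.prems(1)
    by (auto intro: rev_finite_subset)
  have "card {p. p permutes S \<and> (\<forall>z\<in>T. p z \<noteq> z)} = card ?A + card ?B"
    unfolding eq using fA fB disj by (rule card_Un_disjoint)
  then have "int (card ?A) = g (card S) (card T) - g (card S - 1) (card T)"
    using IH1 IH2 by simp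
  then show ?case using insert.hyps by simp
qed

lemma Der_g: "int (Der m) = g m m"
  unfolding Der_def using count_P_aux[of "{1..m}" "{1..m}"] by simp

lemma words_finite: "finite S \<Longrightarrow> finite (words S)"
proof -
  have "words S = permutations_of_set S" by (auto simp: words_def permutations_of_set_def)
  then show "finite S \<Longrightarrow> finite (words S)" by simp
qed

lemma count_H:
  "good S F \<Longrightarrow> a \<in> S \<Longrightarrow> a \<notin> snd ` F \<Longrightarrow>
    int (card {xs\<in>words S. noadj F xs \<and> (xs = [] \<or> hd xs \<noteq> a)}) = g (card S) (Suc (card F))"
proof (induction "card S" arbitrary: S F a)
  case 0
  then have "finite S" by (simp add: good_def)
  with 0 show ?case by auto
next
  case (Suc n)
  from Suc.prems obtain r :: "'a \<Rightarrow> nat" where r: "\<forall>p\<in>F. r (fst p) < r (snd p)"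
    and fin: "finite S" and sub: "F \<subseteq> S \<times> S" and if1: "inj_on fst F" and if2: "inj_on snd F"
    unfolding good_def by blast
  have aS: "a \<in> S" and asnd: "a \<notin> snd ` F" using Suc.prems by auto
  have finF: "finite F" using fin sub by (meson finite_SigmaI finite_subset)
  have cS: "card (S - {a}) = n" using Suc.hyps(2) aS fin by simp
  define Hs where "Hs = {xs\<in>words S. noadj F xs \<and> (xs = [] \<or> hd xs \<noteq> a)}"
  define Cs where "Cs = {xs\<in>words S. noadj F xs \<and> xs \<noteq> [] \<and> hd xs = a}"
  define C where "C = {c\<in>words (S - {a}). noadj F (a # c)}"
  have split: "{xs\<in>words S. noadj F xs} = Hs \<union> Cs" by (auto simp: Hs_def Cs_def)
  have disj: "Hs \<inter> Cs = {}" by (auto simp: Hs_def Cs_def)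
  have finW: "finite (words S)" using words_finite[OF fin] .
  have Cs_eq: "Cs = Cons a ` C"
  proof
    show "Cs \<subseteq> Cons a ` C"
    proof
      fix xs assume xs: "xs \<in> Cs"
      then have xe: "xs = a # tl xs" by (cases xs) (auto simp: Cs_def)
      have d: "distinct xs" and sx: "set xs = S" and nx: "noadj F xs" using xs by (auto simp: Cs_def words_def)
      have d1: "distinct (tl xs)" "a \<notin> set (tl xs)" using d xe by (metis distinct.simps(2))+
      have "insert a (set (tl xs)) = S" using sx xe by (metis list.simps(15))
      then have s1: "set (tl xs) = S - {a}" using d1(2) by blast
      have n1: "noadj F (a # tl xs)" using nx xe by metis
      have "tl xs \<in> C" unfolding C_def words_def using d1(1) s1 n1 by blast
      then show "xs \<in> Cons a ` C" using xe by (metis image_eqI)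
    qed
  next
    show "Cons a ` C \<subseteq> Cs"
    proof
      fix xs assume "xs \<in> Cons a ` C"
      then obtain c where c: "c \<in> C" "xs = a # c" by blast
      then have "distinct c" "set c = S - {a}" "noadj F (a # c)" by (auto simp: C_def words_def)
      then have "distinct (a # c)" "set (a # c) = S" using aS by auto
      then show "xs \<in> Cs" unfolding Cs_def words_def using c \<open>noadj F (a # c)\<close> by simp
    qed
  qed
  have cCs: "card Cs = card C" unfolding Cs_eq by (simp add: card_image)
  have cC: "int (card C) = g n (card F)"
  proof (cases "\<exists>a'. (a, a') \<in> F")
    case True
    then obtain a' where aa': "(a,a') \<in> F" by auto
    define F1 where "F1 = F - {(a,a')}"
    have a'ne: "a' \<noteq> a" using aa' asnd by force
    have a'S: "a' \<in> S" using aa' sub by auto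
    have nfa: "\<And>b. (a,b) \<in> F \<Longrightarrow> b = a'" using if1 aa' by (metis fst_conv inj_on_def snd_conv)
    have F1a: "\<And>u v. (u,v) \<in> F1 \<Longrightarrow> u \<noteq> a \<and> v \<noteq> a"
      using nfa asnd by (force simp: F1_def)
    have gF1: "good (S - {a}) F1" unfolding good_def
    proof (intro conjI)
      show "finite (S - {a})" using fin by simp
      show "F1 \<subseteq> (S - {a}) \<times> (S - {a})" using F1a sub by (force simp: F1_def)
      show "inj_on fst F1" using if1 by (auto simp: F1_def intro: inj_on_subset)
      show "inj_on snd F1" using if2 by (auto simp: F1_def intro: inj_on_subset)
      show "\<exists>r::'a \<Rightarrow> nat. \<forall>p\<in>F1. r (fst p) < r (snd p)" using r by (auto simp: F1_def)
    qed
    have a'n: "a' \<notin> snd ` F1"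
    proof
      assume "a' \<in> snd ` F1"
      then obtain p where "p \<in> F1" "snd p = a'" by auto
      then have "p \<in> F" "p \<noteq> (a,a')" "snd p = snd (a,a')" by (auto simp: F1_def)
      then show False using if2 aa' by (meson inj_onD)
    qed
    have cF1: "card F1 = card F - 1" using aa' finF by (simp add: F1_def)
    have Ceq: "C = {c\<in>words (S - {a}). noadj F1 c \<and> (c = [] \<or> hd c \<noteq> a')}"
    proof -
      have eqn: "noadj F (a # c) = (noadj F1 c \<and> (c = [] \<or> hd c \<noteq> a'))" if "c \<in> words (S - {a})" for c
      proof -
        have ac: "a \<notin> set c" using that by (auto simp: words_def)
        have "F \<inter> (set c \<times> set c) = F1 \<inter> (set c \<times> set c)" using ac unfolding F1_def by blast
        then have "noadj F c = noadj F1 c" by (rule noadj_restrict)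
        moreover have "c \<noteq> [] \<Longrightarrow> ((a, hd c) \<in> F) = (hd c = a')" using nfa aa' by metis
        ultimately show ?thesis unfolding noadj_Cons by blast
      qed
      show ?thesis unfolding C_def using eqn by blast
    qed
    have "a' \<in> S - {a}" using a'S a'ne by simp
    from Suc.hyps(1)[OF cS[symmetric] gF1 this a'n] have
      "int (card C) = g n (Suc (card F1))" unfolding Ceq cS .
    moreover have "Suc (card F1) = card F" using cF1 aa' finF
      by (metis One_nat_def Suc_pred card_gt_0_iff empty_iff)
    ultimately show ?thesis by simp
  next
    case False
    have gF: "good (S - {a}) F" unfolding good_def
    proof (intro conjI)
      show "finite (S - {a})" using fin by simp
      show "F \<subseteq> (S - {a}) \<times> (S - {a})" using False asnd sub by force
    qed (use if1 if2 r in auto)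
    have "C = {c\<in>words (S - {a}). noadj F c}"
      using False by (auto simp: C_def noadj_Cons)
    then show ?thesis using count_N[OF gF] cS by simp
  qed
  have "card {xs\<in>words S. noadj F xs} = card Hs + card Cs"
    unfolding split using disj finW by (subst card_Un_disjoint) (auto simp: Hs_def Cs_def)
  then have "int (card Hs) = g (Suc n) (card F) - g n (card F)"
    using count_N[OF Suc.prems(1)] Suc.hyps(2) cCs cC by simp
  then show ?case unfolding Hs_def using Suc.hyps(2) by (metis g.simps(2) diff_Suc_1)
qed

lemma contains_Cons:
  "contains_pattern (x # w) a b \<longleftrightarrow> (w \<noteq> [] \<and> x = a \<and> hd w = b) \<or> contains_pattern w a b"
proof
  assume "contains_pattern (x # w) a b"
  then obtain t where t: "Suc t < length (x # w)" "(x # w) ! t = a" "(x # w) ! Suc t = b"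
    by (auto simp: contains_pattern_def)
  show "(w \<noteq> [] \<and> x = a \<and> hd w = b) \<or> contains_pattern w a b"
  proof (cases t)
    case 0
    then show ?thesis using t by (cases w) auto
  next
    case (Suc t')
    then have "contains_pattern w a b" unfolding contains_pattern_def
      using t by (intro exI[of _ t']) auto
    then show ?thesis by blast
  qed
next
  assume "(w \<noteq> [] \<and> x = a \<and> hd w = b) \<or> contains_pattern w a b"
  then show "contains_pattern (x # w) a b"
  proof
    assume "w \<noteq> [] \<and> x = a \<and> hd w = b"
    then show ?thesis unfolding contains_pattern_def
      by (intro exI[of _ 0]) (cases w, auto)
  next
    assume "contains_pattern w a b"
    then obtain t where "Suc t < length w" "w ! t = a" "w ! Suc t = b"
      by (auto simp: contains_pattern_def)
    then show ?thesis unfolding contains_pattern_def by (intro exI[of _ "Suc t"]) auto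
  qed
qed

lemma contains_noadj: "contains_pattern xs a b \<longleftrightarrow> \<not> noadj {(a,b)} xs"
proof (induction xs)
  case Nil then show ?case by (simp add: contains_pattern_def)
next
  case (Cons x w)
  then show ?case by (auto simp: contains_Cons noadj_Cons)
qed

lemma noadj_all: "noadj F xs \<longleftrightarrow> (\<forall>p\<in>F. noadj {p} xs)"
  by (induction F xs rule: noadj.induct) auto

definition cs :: "nat \<Rightarrow> nat \<Rightarrow> nat" where
  "cs n k = (if k = n then 1 else Suc k)"

lemma D_noadj:
  assumes "n \<ge> 1"
  shows "D n = {xs \<in> arrangements n. noadj ((\<lambda>k. (k, cs n k)) ` {1..n}) xs}"
proof -
  have "(\<lambda>k. (k, cs n k)) ` {1..n} = (\<lambda>k. (k, Suc k)) ` {1..<n} \<union> {(n,1)}"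
    using assms by (force simp: cs_def)
  then have "noadj ((\<lambda>k. (k, cs n k)) ` {1..n}) xs \<longleftrightarrow>
     (\<forall>k\<in>{1..<n}. \<not> contains_pattern xs k (Suc k)) \<and> \<not> contains_pattern xs n 1" for xs
    by (subst noadj_all) (auto simp: contains_noadj)
  then show ?thesis unfolding D_def by blast
qed

theorem corollary4p4:
  fixes n i :: nat
  assumes "n \<ge> 3" and "i \<in> {1..n}"
  shows "card {xs \<in> D n. hd xs = i} = Der (n - 1)"
proof -
  define c where "c = cs n"
  define Fall where "Fall = (\<lambda>k. (k, c k)) ` {1..n}"
  define S where "S = {1..n} - {i}"
  define F where "F = {p\<in>Fall. fst p \<noteq> i \<and> snd p \<noteq> i}"
  define a where "a = c i"
  define p where "p = (if i = 1 then n else i - 1)"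
  have n1: "n \<ge> 1" and i1: "1 \<le> i" "i \<le> n" using assms by auto
  have crange: "c k \<in> {1..n}" if "k \<in> {1..n}" for k
    using n1 that unfolding c_def by (cases "k = n") (simp_all add: cs_def)
  have cinj: "k = k'" if "k \<in> {1..n}" "k' \<in> {1..n}" "c k = c k'" for k k'
    using that unfolding c_def by (cases "k = n"; cases "k' = n") (simp_all add: cs_def)
  have cp: "c k = i \<longleftrightarrow> k = p" if "k \<in> {1..n}" for k
    using i1 assms(1) that unfolding c_def cs_def p_def by (cases "k = n"; cases "i = 1") auto
  have pin: "p \<in> {1..n}" "p \<noteq> i" using i1 assms(1) by (auto simp: p_def)
  have Feq: "F = (\<lambda>k. (k, c k)) ` ({1..n} - {i, p})"
  proof -
    have "F = (\<lambda>k. (k, c k)) ` {k\<in>{1..n}. k \<noteq> i \<and> c k \<noteq> i}"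
      unfolding F_def Fall_def by auto
    also have "{k\<in>{1..n}. k \<noteq> i \<and> c k \<noteq> i} = {1..n} - {i, p}" using cp by blast
    finally show ?thesis .
  qed
  have cF: "card F = n - 2"
  proof -
    have "inj_on (\<lambda>k. (k, c k)) ({1..n} - {i, p})" by (auto simp: inj_on_def)
    then have "card F = card ({1..n} - {i, p})" by (simp add: Feq card_image)
    also have "\<dots> = n - 2" using pin i1 by (subst card_Diff_subset) auto
    finally show ?thesis .
  qed
  have cS: "card S = n - 1" using i1 by (simp add: S_def)
  define r where "r = (\<lambda>k. if i \<le> k then k - i else k + n - i)"
  have gF: "good S F" unfolding good_def
  proof (intro conjI)
    show "finite S" by (simp add: S_def)
    show "F \<subseteq> S \<times> S" using crange by (auto simp: F_def Fall_def S_def)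
    show "inj_on fst F" by (auto simp: F_def Fall_def inj_on_def)
    show "inj_on snd F" using cinj by (auto simp: F_def Fall_def inj_on_def)
    show "\<exists>r::nat \<Rightarrow> nat. \<forall>q\<in>F. r (fst q) < r (snd q)"
    proof (intro exI ballI)
      fix q assume "q \<in> F"
      then obtain k where k: "q = (k, c k)" "k \<in> {1..n}" "k \<noteq> i" "c k \<noteq> i"
        by (auto simp: F_def Fall_def)
      have ck: "c k = (if k = n then 1 else Suc k)" by (simp add: c_def cs_def)
      show "r (fst q) < r (snd q)"
        using k i1 ck by (cases "k = n") (auto simp: r_def)
    qed
  qed
  have "c i \<noteq> i" using assms(1) unfolding c_def by (cases "i = n") (simp_all add: cs_def)
  then have aS: "a \<in> S" using crange[OF assms(2)] by (simp add: a_def S_def)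
  have an: "a \<notin> snd ` F"
  proof
    assume "a \<in> snd ` F"
    then obtain q where q: "q \<in> F" "snd q = a" by (rule imageE) simp
    then have "q \<in> Fall" "fst q \<noteq> i" unfolding F_def by simp_all
    obtain k where k: "k \<in> {1..n}" "q = (k, c k)" using \<open>q \<in> Fall\<close> unfolding Fall_def by (metis imageE)
    have "c k = c i" using k(2) q(2) by (simp add: a_def)
    then show False using cinj[of k i] assms(2) k \<open>fst q \<noteq> i\<close> by simp
  qed
  define H where "H = {xs\<in>words S. noadj F xs \<and> (xs = [] \<or> hd xs \<noteq> a)}"
  have n2: "Suc (n - 2) = n - 1" using assms(1) by arith
  have cH: "int (card H) = g (n - 1) (n - 1)"
    using count_H[OF gF aS an] unfolding H_def cS cF n2 .
  have Deq: "D n = {xs \<in> arrangements n. noadj Fall xs}"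
    using D_noadj[OF n1] by (simp add: Fall_def c_def)
  have key: "\<And>b. b \<in> words S \<Longrightarrow> noadj Fall (i # b) \<longleftrightarrow> noadj F b \<and> (b = [] \<or> hd b \<noteq> a)"
  proof -
    fix b assume b: "b \<in> words S"
    then have ib: "i \<notin> set b" and sb: "set b = S" by (auto simp: words_def S_def)
    have "Fall \<inter> (set b \<times> set b) = F \<inter> (set b \<times> set b)" using ib unfolding F_def by auto
    then have "noadj Fall b = noadj F b" by (rule noadj_restrict)
    moreover have "(i, v) \<in> Fall \<longleftrightarrow> v = a" for v using i1 by (auto simp: Fall_def a_def)
    ultimately show "noadj Fall (i # b) \<longleftrightarrow> noadj F b \<and> (b = [] \<or> hd b \<noteq> a)"
      by (auto simp: noadj_Cons)
  qed
  have Seq: "{xs \<in> D n. hd xs = i} = Cons i ` H"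
  proof
    show "{xs \<in> D n. hd xs = i} \<subseteq> Cons i ` H"
    proof
      fix xs assume xs: "xs \<in> {xs \<in> D n. hd xs = i}"
      then have d: "distinct xs" and sx: "set xs = {1..n}" and nx: "noadj Fall xs" and hx: "hd xs = i"
        by (auto simp: Deq arrangements_def)
      have "xs \<noteq> []" using sx i1 by auto
      then have xe: "xs = i # tl xs" using hx by (cases xs) auto
      have d1: "distinct (tl xs)" "i \<notin> set (tl xs)" using d xe by (metis distinct.simps(2))+
      have "insert i (set (tl xs)) = {1..n}" using sx xe by (metis list.simps(15))
      then have "set (tl xs) = S" using d1(2) unfolding S_def by blast
      then have w: "tl xs \<in> words S" using d1 by (simp add: words_def)
      then have "tl xs \<in> H" using key[OF w] nx xe unfolding H_def by auto
      then show "xs \<in> Cons i ` H" using xe by (metis image_eqI)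
    qed
  next
    show "Cons i ` H \<subseteq> {xs \<in> D n. hd xs = i}"
    proof
      fix xs assume "xs \<in> Cons i ` H"
      then obtain b where b: "b \<in> H" "xs = i # b" by blast
      then have w: "b \<in> words S" by (simp add: H_def)
      then have db: "distinct b" and sb: "set b = {1..n} - {i}" by (simp_all add: words_def S_def)
      have "i \<notin> set b" using sb by simp
      then have "distinct (i # b)" using db by simp
      moreover have "set (i # b) = {1..n}" using sb assms(2) by (metis insert_Diff list.simps(15))
      moreover have "noadj Fall (i # b)" using key[OF w] b(1) unfolding H_def by simp
      ultimately show "xs \<in> {xs \<in> D n. hd xs = i}" using b by (simp add: Deq arrangements_def)
    qed
  qed
  have "card {xs \<in> D n. hd xs = i} = card H" unfolding Seq by (simp add: card_image)
  then have "int (card {xs \<in> D n. hd xs = i}) = int (Der (n - 1))"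
    using cH Der_g by simp
  then show ?thesis by simp
qed

end
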